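(* Let $A$ be an abelian group, $I$ a finite set, and $(A_i)_{i\in I}$ a family of subgroups of $A$ such that the lattice of subgroups of $A$ generated by the $A_i$ (under the operations $+$ and $\cap$) is distributive. Let $n$ be a positive integer and $(a(i_0,\dots,i_n))_{i_0,\dots,i_n\in I}$ a family of elements of $A$ such that $$\sum_{j=0}^{n+1}(-1)^j\,a(i_0,\dots,\widehat{i_j},\dots,i_{n+1})\equiv 0\pmod{A_{i_0}+\cdots+A_{i_{n+1}}}\quad\text{for all } i_0,\dots,i_{n+1}\in I.$$ Then there exists a family $(x(i_0,\dots,i_{n-1}))_{i_0,\dots,i_{n-1}\in I}$ of elements of $A$ such that $$\sum_{j=0}^{n}(-1)^j\,x(i_0,\dots,\widehat{i_j},\dots,i_n)\equiv a(i_0,\dots,i_n)\pmod{A_{i_0}+\cdots+A_{i_n}}\quad\text{for all } i_0,\dots,i_n\in I.$$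
   Context: A congruence $u\equiv v \pmod{B}$ for a subgroup $B$ of $A$ means $u-v\in B$. A hat $\widehat{i_j}$ means that the entry $i_j$ is omitted. A lattice is distributive if one (equivalently, each) of its two operations distributes over the other. *)

theory Defs
  imports Main
begin

definition subgrp :: "'a::ab_group_add set \<Rightarrow> bool" where
  "subgrp S \<longleftrightarrow> 0 \<in> S \<and> (\<forall>x\<in>S. \<forall>y\<in>S. x - y \<in> S)"

definition sumset :: "'a::ab_group_add set \<Rightarrow> 'a set \<Rightarrow> 'a set" where
  "sumset X Y = {x + y | x y. x \<in> X \<and> y \<in> Y}"

definition subsum :: "('i \<Rightarrow> 'a::ab_group_add set) \<Rightarrow> 'i list \<Rightarrow> 'a set" where
  "subsum Af xs = foldr (\<lambda>i S. sumset (Af i) S) xs {0}"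

inductive_set gen_lattice :: "('i \<Rightarrow> 'a::ab_group_add set) \<Rightarrow> 'i set \<Rightarrow> 'a set set"
  for Af :: "'i \<Rightarrow> 'a set" and I :: "'i set" where
  base: "i \<in> I \<Longrightarrow> Af i \<in> gen_lattice Af I"
| plus: "X \<in> gen_lattice Af I \<Longrightarrow> Y \<in> gen_lattice Af I \<Longrightarrow> sumset X Y \<in> gen_lattice Af I"
| inter: "X \<in> gen_lattice Af I \<Longrightarrow> Y \<in> gen_lattice Af I \<Longrightarrow> X \<inter> Y \<in> gen_lattice Af I"

definition distrib_family :: "'a::ab_group_add set set \<Rightarrow> bool" where
  "distrib_family L \<longleftrightarrow>
     (\<forall>X\<in>L. \<forall>Y\<in>L. \<forall>Z\<in>L. X \<inter> sumset Y Z = sumset (X \<inter> Y) (X \<inter> Z))"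

definition congm :: "'a::ab_group_add \<Rightarrow> 'a \<Rightarrow> 'a set \<Rightarrow> bool" where
  "congm u v B \<longleftrightarrow> u - v \<in> B"

definition omit :: "nat \<Rightarrow> 'i list \<Rightarrow> 'i list" where
  "omit j xs = take j xs @ drop (Suc j) xs"

end

theory Submission
  imports Defs
begin

definition sg :: "nat \<Rightarrow> 'a::ab_group_add \<Rightarrow> 'a" where
  "sg j v = (if even j then v else - v)"

definition dd :: "('i list \<Rightarrow> 'a::ab_group_add) \<Rightarrow> nat \<Rightarrow> 'i list \<Rightarrow> 'a" where
  "dd x m ts = (\<Sum>j\<le>m. sg j (x (omit j ts)))"

lemma sg_sum: "sg j (sum f A) = (\<Sum>x\<in>A. sg j (f x))"
  by (simp add: sg_def sum_negf)
lemma sg_sg: "sg j (sg l v) = sg (j+l) v"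
  by (simp add: sg_def)
lemma sg_Suc: "sg (Suc j) v = - sg j v"
  by (simp add: sg_def)
lemma sg_0: "sg 0 v = v"
  by (simp add: sg_def)
lemma sg_add: "sg j (u + v) = sg j u + sg j v"
  by (simp add: sg_def)
lemma sg_diff: "sg j (u - v) = sg j u - sg j v"
  by (simp add: sg_def)

lemma dd_add: "dd (\<lambda>s. f s + g s) m t = dd f m t + dd g m t"
  by (simp add: dd_def sg_add sum.distrib)
lemma dd_diff: "dd (\<lambda>s. f s - g s) m t = dd f m t - dd g m t"
  by (simp add: dd_def sg_diff sum_subtractf)

lemma omit_Cons0: "omit 0 (k#t) = t"
  by (simp add: omit_def)
lemma omit_Cons_Suc: "omit (Suc j) (k#t) = k # omit j t"
  by (simp add: omit_def)
lemma omit_length: "j < length u \<Longrightarrow> length (omit j u) = length u - 1"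
  by (simp add: omit_def)
lemma omit_set: "set (omit j u) \<subseteq> set u"
  unfolding omit_def by (auto dest: in_set_takeD in_set_dropD)

lemma omit_comm: "j \<le> l \<Longrightarrow> omit l (omit j u) = omit j (omit (Suc l) u)"
  unfolding omit_def
  apply (cases "l < length u")
   apply (simp add: min_def take_drop)
  apply (simp add: min_def take_drop)
  done

lemma dd_cone: "dd a (Suc m) (k#t) = a t - dd (\<lambda>s. a (k#s)) m t"
  unfolding dd_def
  by (simp only: sum.atMost_Suc_shift) (simp add: omit_Cons0 omit_Cons_Suc sg_Suc sg_0 sum_negf del: sum.atMost_Suc)

lemma dd_dd: "dd (\<lambda>s. dd x m s) (Suc m) u = 0"
proof -
  let ?f = "\<lambda>(j,l). sg (j+l) (x (omit l (omit j u)))"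
  define S1 where "S1 = {(j,l). j \<le> l \<and> l \<le> m}"
  define S2 where "S2 = {(j,l). l < j \<and> j \<le> Suc m}"
  have fin1: "finite S1"
    by (rule finite_subset[of _ "{..m} \<times> {..m}"]) (auto simp: S1_def)
  have fin2: "finite S2"
    by (rule finite_subset[of _ "{..Suc m} \<times> {..Suc m}"]) (auto simp: S2_def)
  have "dd (\<lambda>s. dd x m s) (Suc m) u = (\<Sum>j\<le>Suc m. \<Sum>l\<le>m. ?f (j,l))"
    by (simp add: dd_def sg_sum sg_sg)
  also have "\<dots> = sum ?f ({..Suc m} \<times> {..m})"
    by (simp add: sum.cartesian_product)
  also have "{..Suc m} \<times> {..m} = S1 \<union> S2"
    by (auto simp: S1_def S2_def)
  also have "sum ?f (S1 \<union> S2) = sum ?f S1 + sum ?f S2"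
    by (rule sum.union_disjoint[OF fin1 fin2]) (auto simp: S1_def S2_def)
  also have "sum ?f S1 = sum (\<lambda>p. - ?f p) S2"
  proof (rule sum.reindex_bij_witness[where i = "\<lambda>(a,b). (b, a - 1)" and j = "\<lambda>(a,b). (Suc b, a)"], goal_cases)
    case (1 p) then show ?case by (auto simp: S1_def)
  next
    case (2 p) then show ?case by (auto simp: S1_def S2_def)
  next
    case (3 p) then show ?case by (auto simp: S2_def)
  next
    case (4 p) then show ?case by (auto simp: S1_def S2_def)
  next
    case (5 p)
    then obtain j l where p: "p = (j,l)" "j \<le> l" by (auto simp: S1_def)
    then show ?case
      by (simp add: omit_comm[symmetric] sg_Suc add.commute)
  qed
  also have "sum (\<lambda>p. - ?f p) S2 + sum ?f S2 = 0"
    by (simp add: sum_negf)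
  finally show ?thesis .
qed


lemma subgrp_0: "subgrp S \<Longrightarrow> 0 \<in> S"
  by (simp add: subgrp_def)
lemma subgrp_diff: "subgrp S \<Longrightarrow> x \<in> S \<Longrightarrow> y \<in> S \<Longrightarrow> x - y \<in> S"
  by (simp add: subgrp_def)
lemma subgrp_neg: "subgrp S \<Longrightarrow> x \<in> S \<Longrightarrow> - x \<in> S"
  using subgrp_diff[of S 0 x] subgrp_0[of S] by simp
lemma subgrp_add: "subgrp S \<Longrightarrow> x \<in> S \<Longrightarrow> y \<in> S \<Longrightarrow> x + y \<in> S"
  using subgrp_diff[of S x "- y"] subgrp_neg[of S y] by simp
lemma subgrp_sum: "subgrp S \<Longrightarrow> (\<forall>x\<in>A. f x \<in> S) \<Longrightarrow> sum f A \<in> S"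
proof (induction A rule: infinite_finite_induct)
  case (infinite A) then show ?case by (simp add: subgrp_0)
next
  case empty then show ?case by (simp add: subgrp_0)
next
  case (insert x F) then show ?case by (simp add: subgrp_add)
qed
lemma subgrp_sg: "subgrp S \<Longrightarrow> v \<in> S \<Longrightarrow> sg j v \<in> S"
  by (simp add: sg_def subgrp_neg)
lemma dd_in: "subgrp S \<Longrightarrow> (\<And>j. j \<le> m \<Longrightarrow> x (omit j t) \<in> S) \<Longrightarrow> dd x m t \<in> S"
  unfolding dd_def by (rule subgrp_sum) (auto intro: subgrp_sg)
lemma subgrp_Int: "subgrp X \<Longrightarrow> subgrp Y \<Longrightarrow> subgrp (X \<inter> Y)"
  by (simp add: subgrp_def)

lemma subgrp_sumset: "subgrp X \<Longrightarrow> subgrp Y \<Longrightarrow> subgrp (sumset X Y)"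
  unfolding subgrp_def sumset_def
proof (intro conjI ballI)
  assume h: "0 \<in> X \<and> (\<forall>x\<in>X. \<forall>y\<in>X. x - y \<in> X)" "0 \<in> Y \<and> (\<forall>x\<in>Y. \<forall>y\<in>Y. x - y \<in> Y)"
  show "0 \<in> {x + y |x y. x \<in> X \<and> y \<in> Y}" using h by force
  fix u v assume "u \<in> {x + y |x y. x \<in> X \<and> y \<in> Y}" "v \<in> {x + y |x y. x \<in> X \<and> y \<in> Y}"
  then obtain x1 y1 x2 y2 where "u = x1 + y1" "v = x2 + y2" "x1 \<in> X" "x2 \<in> X" "y1 \<in> Y" "y2 \<in> Y"
    by blast
  moreover have "(x1 + y1) - (x2 + y2) = (x1 - x2) + (y1 - y2)" by simp
  ultimately show "u - v \<in> {x + y |x y. x \<in> X \<and> y \<in> Y}" using h by blast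
qed
lemma sumset_le: "subgrp Z \<Longrightarrow> X \<subseteq> Z \<Longrightarrow> Y \<subseteq> Z \<Longrightarrow> sumset X Y \<subseteq> Z"
  unfolding sumset_def using subgrp_add by blast
lemma sumset_left: "subgrp Y \<Longrightarrow> X \<subseteq> sumset X Y"
  unfolding sumset_def using subgrp_0 by force
lemma sumset_right: "subgrp X \<Longrightarrow> Y \<subseteq> sumset X Y"
  unfolding sumset_def using subgrp_0 by force
lemma sumset_zero: "sumset X {0} = X"
  unfolding sumset_def by auto
lemma sumset_mono: "X \<subseteq> X' \<Longrightarrow> Y \<subseteq> Y' \<Longrightarrow> sumset X Y \<subseteq> sumset X' Y'"
  unfolding sumset_def by blast

lemma subsum_Nil: "subsum Af [] = {0}"
  by (simp add: subsum_def)
lemma subsum_Cons: "subsum Af (i # xs) = sumset (Af i) (subsum Af xs)"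
  by (simp add: subsum_def)

lemma subgrp_subsum: "\<forall>i\<in>set xs. subgrp (Af i) \<Longrightarrow> subgrp (subsum Af xs)"
  by (induction xs) (auto simp: subsum_Nil subsum_Cons subgrp_def[of "{0}"] subgrp_sumset)

lemma subsum_member: "\<forall>i\<in>set ys. subgrp (Af i) \<Longrightarrow> i \<in> set ys \<Longrightarrow> Af i \<subseteq> subsum Af ys"
proof (induction ys)
  case Nil then show ?case by simp
next
  case (Cons j ys)
  show ?case
  proof (cases "i = j")
    case True then show ?thesis using Cons.prems
      by (simp add: subsum_Cons sumset_left subgrp_subsum)
  next
    case False
    then have "Af i \<subseteq> subsum Af ys" using Cons by simp
    also have "\<dots> \<subseteq> sumset (Af j) (subsum Af ys)" using Cons.prems by (simp add: sumset_right)
    finally show ?thesis by (simp add: subsum_Cons)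
  qed
qed

lemma subsum_sub: "\<forall>i\<in>set ys. subgrp (Af i) \<Longrightarrow> set xs \<subseteq> set ys \<Longrightarrow> subsum Af xs \<subseteq> subsum Af ys"
proof (induction xs)
  case Nil then show ?case by (simp add: subsum_Nil subgrp_0 subgrp_subsum)
next
  case (Cons i xs)
  then show ?case
    by (simp add: subsum_Cons sumset_le subgrp_subsum subsum_member)
qed

lemma subsum_mono_fun: "\<forall>i\<in>set xs. Bf i \<subseteq> Af i \<Longrightarrow> subsum Bf xs \<subseteq> subsum Af xs"
  by (induction xs) (simp_all add: subsum_Nil subsum_Cons sumset_mono)

lemma subsum_in_lattice: "xs \<noteq> [] \<Longrightarrow> set xs \<subseteq> I \<Longrightarrow> subsum Af xs \<in> gen_lattice Af I"
proof (induction xs)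
  case Nil then show ?case by simp
next
  case (Cons i xs)
  show ?case
  proof (cases "xs = []")
    case True then show ?thesis using Cons.prems
      by (simp add: subsum_Cons subsum_Nil sumset_zero gen_lattice.base)
  next
    case False then show ?thesis using Cons
      by (simp add: subsum_Cons gen_lattice.plus gen_lattice.base)
  qed
qed

lemma subsum_inter:
  assumes "distrib_family (gen_lattice Af I)" "k \<in> I" "0 \<in> Af k"
  shows "set xs \<subseteq> I \<Longrightarrow> Af k \<inter> subsum Af xs = subsum (\<lambda>i. Af i \<inter> Af k) xs"
proof (induction xs)
  case Nil then show ?case using assms by (auto simp: subsum_Nil)
next
  case (Cons i xs)
  show ?case
  proof (cases "xs = []")
    case True then show ?thesis
      by (simp add: subsum_Cons subsum_Nil sumset_zero Int_commute)
  next
    case False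
    have "Af k \<inter> sumset (Af i) (subsum Af xs) = sumset (Af k \<inter> Af i) (Af k \<inter> subsum Af xs)"
      using assms(1) Cons.prems assms(2) False
      unfolding distrib_family_def
      by (simp add: gen_lattice.base subsum_in_lattice)
    then show ?thesis using Cons by (simp add: subsum_Cons Int_commute)
  qed
qed

lemma lattice_sub: "gen_lattice (\<lambda>i. Af i \<inter> Af k) F \<subseteq> gen_lattice Af (insert k F)"
proof
  fix X assume "X \<in> gen_lattice (\<lambda>i. Af i \<inter> Af k) F"
  then show "X \<in> gen_lattice Af (insert k F)"
    by induction (auto intro: gen_lattice.intros)
qed

lemma distrib_mono: "L \<subseteq> M \<Longrightarrow> distrib_family M \<Longrightarrow> distrib_family L"
  unfolding distrib_family_def by blast


lemma main:
  assumes "finite I"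
  shows "\<And>Af G a. subgrp G \<Longrightarrow> \<forall>i\<in>I. subgrp (Af i) \<and> Af i \<subseteq> G \<Longrightarrow> distrib_family (gen_lattice Af I)
    \<Longrightarrow> \<forall>ts. a ts \<in> G
    \<Longrightarrow> \<forall>ts. length ts = Suc (Suc n) \<and> set ts \<subseteq> I \<longrightarrow> dd a (Suc n) ts \<in> subsum Af ts
    \<Longrightarrow> \<exists>x. (\<forall>s. x s \<in> G) \<and> (\<forall>ts. length ts = Suc n \<and> set ts \<subseteq> I \<longrightarrow> a ts - dd x n ts \<in> subsum Af ts)"
  using assms
proof (induction I rule: finite_induct)
  case empty
  then show ?case by (intro exI[of _ "\<lambda>_. 0"]) (auto simp: subgrp_0)
next
  case (insert k F Af G a)
  let ?I = "insert k F"
  have sgA: "\<forall>i\<in>?I. subgrp (Af i)" and AG: "\<forall>i\<in>?I. Af i \<subseteq> G"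
    using insert.prems(2) by auto
  have sgk: "subgrp (Af k)" using sgA by simp
  have coc: "\<And>ts. length ts = Suc (Suc n) \<Longrightarrow> set ts \<subseteq> ?I \<Longrightarrow> dd a (Suc n) ts \<in> subsum Af ts"
    using insert.prems(5) by blast
  define x1 where "x1 = (\<lambda>s. a (k#s))"
  have x1G: "\<forall>s. x1 s \<in> G" using insert.prems(4) by (simp add: x1_def)
  define a1 where "a1 = (\<lambda>t. a t - dd x1 n t)"
  have a1_eq: "a1 t = dd a (Suc n) (k#t)" for t
    by (simp add: a1_def x1_def dd_cone)
  have ex_b: "\<exists>bt. bt \<in> Af k \<and> a1 t - bt \<in> subsum Af t" if "length t = Suc n" "set t \<subseteq> ?I" for t
  proof -
    have "a1 t \<in> sumset (Af k) (subsum Af t)"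
      using coc[of "k#t"] that unfolding a1_eq subsum_Cons by simp
    then obtain p q where "p \<in> Af k" "q \<in> subsum Af t" "a1 t = p + q"
      unfolding sumset_def by blast
    then show ?thesis by (intro exI[of _ p]) simp
  qed
  define b where "b = (\<lambda>t. if length t = Suc n \<and> set t \<subseteq> ?I
      then (SOME bt. bt \<in> Af k \<and> a1 t - bt \<in> subsum Af t) else 0)"
  have bk: "\<forall>t. b t \<in> Af k"
  proof
    fix t show "b t \<in> Af k"
      using someI_ex[OF ex_b[of t]] by (simp add: b_def subgrp_0[OF sgk])
  qed
  have ba1: "a1 t - b t \<in> subsum Af t" if "length t = Suc n" "set t \<subseteq> ?I" for t
    using someI_ex[OF ex_b[OF that]] that by (simp add: b_def)
  define Bf where "Bf = (\<lambda>i. Af i \<inter> Af k)"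
  have cocyc: "\<forall>u. length u = Suc (Suc n) \<and> set u \<subseteq> F \<longrightarrow> dd b (Suc n) u \<in> subsum Bf u"
  proof (intro allI impI)
    fix u assume u: "length u = Suc (Suc n) \<and> set u \<subseteq> F"
    then have uI: "set u \<subseteq> ?I" by auto
    have sgu: "subgrp (subsum Af u)" using sgA uI by (intro subgrp_subsum) blast
    have "dd a1 (Suc n) u = dd a (Suc n) u - dd (\<lambda>s. dd x1 n s) (Suc n) u"
      unfolding a1_def by (rule dd_diff)
    also have "\<dots> = dd a (Suc n) u" by (simp add: dd_dd)
    finally have 1: "dd a1 (Suc n) u \<in> subsum Af u" using coc u uI by simp
    have 2: "dd (\<lambda>t. a1 t - b t) (Suc n) u \<in> subsum Af u"
    proof (rule dd_in[OF sgu])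
      fix j assume j: "j \<le> Suc n"
      have l: "length (omit j u) = Suc n" using j u by (simp add: omit_length)
      have s: "set (omit j u) \<subseteq> ?I" using omit_set[of j u] uI by (rule subset_trans)
      have "a1 (omit j u) - b (omit j u) \<in> subsum Af (omit j u)" using ba1 l s by blast
      moreover have "subsum Af (omit j u) \<subseteq> subsum Af u"
        using sgA uI omit_set[of j u] by (intro subsum_sub) blast+
      ultimately show "a1 (omit j u) - b (omit j u) \<in> subsum Af u" by blast
    qed
    have "dd b (Suc n) u = dd a1 (Suc n) u - dd (\<lambda>t. a1 t - b t) (Suc n) u"
      by (simp add: dd_diff)
    then have in_u: "dd b (Suc n) u \<in> subsum Af u" using subgrp_diff[OF sgu 1 2] by simp
    have in_k: "dd b (Suc n) u \<in> Af k" using bk by (intro dd_in[OF sgk]) simp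
    have "Af k \<inter> subsum Af u = subsum Bf u"
      unfolding Bf_def
      by (rule subsum_inter[OF insert.prems(3) _ subgrp_0[OF sgk] uI]) simp
    then show "dd b (Suc n) u \<in> subsum Bf u" using in_u in_k by blast
  qed
  have "\<exists>y. (\<forall>s. y s \<in> Af k) \<and> (\<forall>ts. length ts = Suc n \<and> set ts \<subseteq> F \<longrightarrow> b ts - dd y n ts \<in> subsum Bf ts)"
  proof (rule insert.IH[OF sgk])
    show "\<forall>i\<in>F. subgrp (Bf i) \<and> Bf i \<subseteq> Af k"
      using sgA by (auto simp: Bf_def subgrp_Int)
    show "distrib_family (gen_lattice Bf F)"
      unfolding Bf_def by (rule distrib_mono[OF lattice_sub insert.prems(3)])
    show "\<forall>ts. b ts \<in> Af k" by (rule bk)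
    show "\<forall>ts. length ts = Suc (Suc n) \<and> set ts \<subseteq> F \<longrightarrow> dd b (Suc n) ts \<in> subsum Bf ts"
      by (rule cocyc)
  qed
  then obtain y where yk: "\<forall>s. y s \<in> Af k"
    and yF: "\<forall>ts. length ts = Suc n \<and> set ts \<subseteq> F \<longrightarrow> b ts - dd y n ts \<in> subsum Bf ts"
    by blast
  show ?case
  proof (intro exI[of _ "\<lambda>s. x1 s + y s"] conjI allI impI)
    fix s show "x1 s + y s \<in> G"
      using x1G yk AG insert.prems(1) by (intro subgrp_add) auto
  next
    fix ts assume ts: "length ts = Suc n \<and> set ts \<subseteq> ?I"
    have sgt: "subgrp (subsum Af ts)" using sgA ts by (intro subgrp_subsum) blast
    have eq: "a ts - dd (\<lambda>s. x1 s + y s) n ts = (a1 ts - b ts) + (b ts - dd y n ts)"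
      by (simp add: dd_add a1_def)
    have p1: "a1 ts - b ts \<in> subsum Af ts" using ba1 ts by blast
    have p2: "b ts - dd y n ts \<in> subsum Af ts"
    proof (cases "set ts \<subseteq> F")
      case True
      then have "b ts - dd y n ts \<in> subsum Bf ts" using yF ts by blast
      moreover have "subsum Bf ts \<subseteq> subsum Af ts"
        by (rule subsum_mono_fun) (auto simp: Bf_def)
      ultimately show ?thesis by blast
    next
      case False
      then have kt: "k \<in> set ts" using ts by blast
      have "b ts - dd y n ts \<in> Af k"
        using bk yk sgk by (intro subgrp_diff dd_in) auto
      moreover have "Af k \<subseteq> subsum Af ts"
        using sgA ts kt by (intro subsum_member) blast+
      ultimately show ?thesis by blast
    qed
    show "a ts - dd (\<lambda>s. x1 s + y s) n ts \<in> subsum Af ts"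
      unfolding eq using p1 p2 sgt by (rule subgrp_add[rotated])
  qed
qed


theorem theorem4:
  fixes Af :: "'i \<Rightarrow> 'a::ab_group_add set" and I :: "'i set"
    and n :: nat and a :: "'i list \<Rightarrow> 'a"
  assumes "finite I"
    and "\<forall>i\<in>I. subgrp (Af i)"
    and "distrib_family (gen_lattice Af I)"
    and "n \<ge> 1"
    and "\<forall>ts. length ts = n + 2 \<and> set ts \<subseteq> I \<longrightarrow>
           congm (\<Sum>j\<le>n+1. (if even j then a (omit j ts) else - a (omit j ts))) 0 (subsum Af ts)"
  shows "\<exists>x :: 'i list \<Rightarrow> 'a. \<forall>ts. length ts = n + 1 \<and> set ts \<subseteq> I \<longrightarrow>
           congm (\<Sum>j\<le>n. (if even j then x (omit j ts) else - x (omit j ts))) (a ts) (subsum Af ts)"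
proof -
  have dd_eq: "dd x m ts = (\<Sum>j\<le>m. (if even j then x (omit j ts) else - x (omit j ts)))"
    for x :: "'i list \<Rightarrow> 'a" and m ts
    by (simp add: dd_def sg_def)
  have UG: "subgrp (UNIV :: 'a set)" by (simp add: subgrp_def)
  have "\<exists>x. (\<forall>s. x s \<in> (UNIV :: 'a set)) \<and> (\<forall>ts. length ts = Suc n \<and> set ts \<subseteq> I \<longrightarrow> a ts - dd x n ts \<in> subsum Af ts)"
  proof (rule main[OF assms(1) UG])
    show "\<forall>i\<in>I. subgrp (Af i) \<and> Af i \<subseteq> UNIV" using assms(2) by simp
    show "distrib_family (gen_lattice Af I)" by (rule assms(3))
    show "\<forall>ts. a ts \<in> UNIV" by simp
    show "\<forall>ts. length ts = Suc (Suc n) \<and> set ts \<subseteq> I \<longrightarrow> dd a (Suc n) ts \<in> subsum Af ts"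
      using assms(5) by (simp add: dd_eq congm_def)
  qed
  then obtain x where x: "\<forall>ts. length ts = Suc n \<and> set ts \<subseteq> I \<longrightarrow> a ts - dd x n ts \<in> subsum Af ts"
    by blast
  show ?thesis
  proof (intro exI[of _ x] allI impI)
    fix ts :: "'i list" assume ts: "length ts = n + 1 \<and> set ts \<subseteq> I"
    have sgt: "subgrp (subsum Af ts)" using assms(2) ts by (intro subgrp_subsum) blast
    have "a ts - dd x n ts \<in> subsum Af ts" using x ts by simp
    then have "- (a ts - dd x n ts) \<in> subsum Af ts" by (rule subgrp_neg[OF sgt])
    then show "congm (\<Sum>j\<le>n. (if even j then x (omit j ts) else - x (omit j ts))) (a ts) (subsum Af ts)"
      by (simp add: congm_def dd_eq[symmetric])
  qed
qed

end
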